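(* Assume $a+b\ge1$. Then, conditionally on $(\omega',\sigma')$, the configuration $\omega$ is distributed like $\eta(\sigma')\cup\zeta$, where $\zeta$ is a Bernoulli bond percolation on $(\omega')^\dagger$ with success probability $\frac{1-b}{a}$ (each edge of $(\omega')^\dagger$ included independently with this probability).
   Context: Let $M$ be a compact orientable surface without boundary, or the plane. Let $\mathsf G=(\mathsf V,\mathsf E)$ be a finite connected graph embedded in $M$ with all faces topological discs, and $\mathsf G^*=(\mathsf U,\mathsf E^* )$ its embedded dual ($\mathsf U$ = faces of $\mathsf G$); $e^*$ is the dual edge crossing $e$ (and $(e^* )^*=e$), $\xi^*=\{e^*:e\in\xi\}$, and for $\xi\subseteq\mathsf E^*$, $\xi^\dagger=\mathsf E\setminus\xi^*$. Fix integers $q,q'\ge1$, finite $Q,Q'\subset\mathbb C$ with $Q=-Q$, $Q'=-Q'$, $|Q|=q$, $|Q'|=q'$, and $a,b\in(0,1]$. For $\sigma:\mathsf V\to Q$, $\eta(\sigma)\subseteq\mathsf E^*$ is the set of $e^*$ whose primal $e$ has endpoints with different $\sigma$-values; for $\sigma':\mathsf U\to Q'$, $\eta(\sigma')\subseteq\mathsf E$ is the set of $e$ whose dual $e^*$ has endpoints with different $\sigma'$-values. $\mathbf P(\sigma,\sigma')\propto a^{|\eta(\sigma')|}b^{|\eta(\sigma)|}$ on $\Sigma=\{(\sigma,\sigma'):\eta(\sigma)^*\cap\eta(\sigma')=\emptyset\}$. Percolation (for $a+b\ge1$): given $(\sigma,\sigma')$, every edge of $\eta(\sigma')$ and every dual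 edge of $\eta(\sigma)$ is open; for each pair $(e,e^* )$ with $e\notin\eta(\sigma')$, $e^*\notin\eta(\sigma)$, independently, ($e$ open, $e^*$ closed) w.p. $1-b$, ($e$ closed, $e^*$ open) w.p. $1-a$, both closed w.p. $a+b-1$. $\omega\subseteq\mathsf E$ and $\omega'\subseteq\mathsf E^*$ are the sets of open primal and dual edges, with joint law $\mathbf P$. *)

theory Defs
  imports "HOL-Library.FuncSet" Complex_Main
begin

text \<open>Combinatorial encoding of a finite connected graph cellularly embedded in a
compact orientable surface (or the plane, i.e. the sphere), together with its dual.
Primal edges are indexed by a set E; the dual edge e* is identified with its index e.
ends e = the two endpoints (vertices) of e; dends e = the two endpoints (faces) of e*.
The embedding is encoded by a rotation system on darts E \<times> bool (Heffter--Edmonds):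
vertices are the orbits of the rotation phi, faces are the orbits of phi \<circ> alpha,
where alpha flips the two darts of an edge.\<close>

definition dart_alpha :: "'e \<times> bool \<Rightarrow> 'e \<times> bool" where
  "dart_alpha d = (fst d, \<not> snd d)"

definition dart_vtx :: "('e \<Rightarrow> 'v \<times> 'v) \<Rightarrow> 'e \<times> bool \<Rightarrow> 'v" where
  "dart_vtx ends d = (if snd d then fst (ends (fst d)) else snd (ends (fst d)))"

definition dart_face :: "('e \<Rightarrow> 'u \<times> 'u) \<Rightarrow> 'e \<times> bool \<Rightarrow> 'u" where
  "dart_face dends d = (if snd d then fst (dends (fst d)) else snd (dends (fst d)))"

definition graph_adj :: "'e set \<Rightarrow> ('e \<Rightarrow> 'v \<times> 'v) \<Rightarrow> ('v \<times> 'v) set" where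
  "graph_adj E ends = (\<Union>e\<in>E. {ends e, prod.swap (ends e)})"

definition cellularly_embedded_with_dual ::
  "'v set \<Rightarrow> 'u set \<Rightarrow> 'e set \<Rightarrow> ('e \<Rightarrow> 'v \<times> 'v) \<Rightarrow> ('e \<Rightarrow> 'u \<times> 'u) \<Rightarrow> bool" where
  "cellularly_embedded_with_dual V U E ends dends \<longleftrightarrow>
     finite V \<and> finite U \<and> finite E \<and> V \<noteq> {} \<and>
     (\<forall>e\<in>E. fst (ends e) \<in> V \<and> snd (ends e) \<in> V) \<and>
     (\<forall>e\<in>E. fst (dends e) \<in> U \<and> snd (dends e) \<in> U) \<and>
     (\<forall>v\<in>V. \<forall>w\<in>V. (v, w) \<in> (graph_adj E ends)\<^sup>*) \<and>
     (E = {} \<longrightarrow> card V = 1 \<and> card U = 1) \<and>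
     (E \<noteq> {} \<longrightarrow>
       (let D = E \<times> (UNIV :: bool set) in
        (\<exists>phi. bij_betw phi D D \<and>
           (\<forall>d\<in>D. dart_vtx ends (phi d) = dart_vtx ends d) \<and>
           (\<forall>d\<in>D. \<forall>d'\<in>D. dart_vtx ends d = dart_vtx ends d' \<longrightarrow> (\<exists>n. (phi ^^ n) d = d')) \<and>
           (\<forall>d\<in>D. dart_face dends (phi (dart_alpha d)) = dart_face dends d) \<and>
           (\<forall>d\<in>D. \<forall>d'\<in>D. dart_face dends d = dart_face dends d' \<longrightarrow>
               (\<exists>n. ((phi \<circ> dart_alpha) ^^ n) d = d')) \<and>
           dart_face dends ` D = U)))"

text \<open>eta_primal: the set of (indices of) dual edges e* such that sigma differs on the
endpoints of e, i.e. eta(sigma) (as a subset of E via e* \<leftrightarrow> e).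
eta_dual: eta(sigma'), the set of primal edges e whose dual has endpoints with different sigma'.\<close>

definition eta_primal :: "'e set \<Rightarrow> ('e \<Rightarrow> 'v \<times> 'v) \<Rightarrow> ('v \<Rightarrow> complex) \<Rightarrow> 'e set" where
  "eta_primal E ends \<sigma> = {e \<in> E. \<sigma> (fst (ends e)) \<noteq> \<sigma> (snd (ends e))}"

definition eta_dual :: "'e set \<Rightarrow> ('e \<Rightarrow> 'u \<times> 'u) \<Rightarrow> ('u \<Rightarrow> complex) \<Rightarrow> 'e set" where
  "eta_dual E dends \<sigma>' = {e \<in> E. \<sigma>' (fst (dends e)) \<noteq> \<sigma>' (snd (dends e))}"

definition spin_weight :: "real \<Rightarrow> real \<Rightarrow> 'e set \<Rightarrow> ('e \<Rightarrow> 'v \<times> 'v) \<Rightarrow> ('e \<Rightarrow> 'u \<times> 'u)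
    \<Rightarrow> ('v \<Rightarrow> complex) \<Rightarrow> ('u \<Rightarrow> complex) \<Rightarrow> real" where
  "spin_weight a b E ends dends \<sigma> \<sigma>' =
     (if eta_primal E ends \<sigma> \<inter> eta_dual E dends \<sigma>' = {}
      then a ^ card (eta_dual E dends \<sigma>') * b ^ card (eta_primal E ends \<sigma>) else 0)"

text \<open>Conditional law of (omega, omega') given (sigma, sigma'), with omega \<subseteq> E the open
primal edges and omega' \<subseteq> E the (indices of) open dual edges.\<close>
definition perc_kernel :: "real \<Rightarrow> real \<Rightarrow> 'e set \<Rightarrow> 'e set \<Rightarrow> 'e set \<Rightarrow> 'e set \<Rightarrow> 'e set \<Rightarrow> real" where
  "perc_kernel a b E etaS etaS' \<omega> \<omega>' =
     (if etaS' \<subseteq> \<omega> \<and> etaS \<subseteq> \<omega>' \<and> \<omega> \<inter> \<omega>' = {} \<and> \<omega> \<subseteq> E \<and> \<omega>' \<subseteq> E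
      then (1 - b) ^ card (\<omega> - etaS') * (1 - a) ^ card (\<omega>' - etaS)
           * (a + b - 1) ^ card (E - \<omega> - \<omega>')
      else 0)"

definition partition_fn :: "'v set \<Rightarrow> 'u set \<Rightarrow> 'e set \<Rightarrow> ('e \<Rightarrow> 'v \<times> 'v) \<Rightarrow> ('e \<Rightarrow> 'u \<times> 'u)
    \<Rightarrow> complex set \<Rightarrow> complex set \<Rightarrow> real \<Rightarrow> real \<Rightarrow> real" where
  "partition_fn V U E ends dends Q Q' a b =
     (\<Sum>\<sigma>\<in>PiE V (\<lambda>_. Q). \<Sum>\<sigma>'\<in>PiE U (\<lambda>_. Q'). spin_weight a b E ends dends \<sigma> \<sigma>')"

definition joint_prob :: "'v set \<Rightarrow> 'u set \<Rightarrow> 'e set \<Rightarrow> ('e \<Rightarrow> 'v \<times> 'v) \<Rightarrow> ('e \<Rightarrow> 'u \<times> 'u)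
    \<Rightarrow> complex set \<Rightarrow> complex set \<Rightarrow> real \<Rightarrow> real
    \<Rightarrow> ('v \<Rightarrow> complex) \<Rightarrow> ('u \<Rightarrow> complex) \<Rightarrow> 'e set \<Rightarrow> 'e set \<Rightarrow> real" where
  "joint_prob V U E ends dends Q Q' a b \<sigma> \<sigma>' \<omega> \<omega>' =
     (if \<sigma> \<in> PiE V (\<lambda>_. Q) \<and> \<sigma>' \<in> PiE U (\<lambda>_. Q')
      then spin_weight a b E ends dends \<sigma> \<sigma>'
           * perc_kernel a b E (eta_primal E ends \<sigma>) (eta_dual E dends \<sigma>') \<omega> \<omega>'
           / partition_fn V U E ends dends Q Q' a b
      else 0)"

definition prob_dual_cond :: "'v set \<Rightarrow> 'u set \<Rightarrow> 'e set \<Rightarrow> ('e \<Rightarrow> 'v \<times> 'v) \<Rightarrow> ('e \<Rightarrow> 'u \<times> 'u)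
    \<Rightarrow> complex set \<Rightarrow> complex set \<Rightarrow> real \<Rightarrow> real \<Rightarrow> ('u \<Rightarrow> complex) \<Rightarrow> 'e set \<Rightarrow> real" where
  "prob_dual_cond V U E ends dends Q Q' a b s' B =
     (\<Sum>\<sigma>\<in>PiE V (\<lambda>_. Q). \<Sum>\<omega>\<in>Pow E. joint_prob V U E ends dends Q Q' a b \<sigma> s' \<omega> B)"

definition prob_primal_dual :: "'v set \<Rightarrow> 'u set \<Rightarrow> 'e set \<Rightarrow> ('e \<Rightarrow> 'v \<times> 'v) \<Rightarrow> ('e \<Rightarrow> 'u \<times> 'u)
    \<Rightarrow> complex set \<Rightarrow> complex set \<Rightarrow> real \<Rightarrow> real \<Rightarrow> ('u \<Rightarrow> complex) \<Rightarrow> 'e set \<Rightarrow> 'e set \<Rightarrow> real" where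
  "prob_primal_dual V U E ends dends Q Q' a b s' A B =
     (\<Sum>\<sigma>\<in>PiE V (\<lambda>_. Q). joint_prob V U E ends dends Q Q' a b \<sigma> s' A B)"

definition bern_union_law :: "real \<Rightarrow> 'e set \<Rightarrow> 'e set \<Rightarrow> 'e set \<Rightarrow> real" where
  "bern_union_law p S eta A =
     (\<Sum>\<zeta>\<in>Pow S. if eta \<union> \<zeta> = A then p ^ card \<zeta> * (1 - p) ^ (card S - card \<zeta>) else 0)"

end

theory Submission
  imports Defs
begin

lemma bin_pow:
  fixes x y :: real
  assumes "finite S"
  shows "(\<Sum>Z\<in>Pow S. x ^ card Z * y ^ card (S - Z)) = (x + y) ^ card S"
proof -
  have "(\<Prod>i\<in>S. x + y) = (\<Sum>Z\<in>Pow S. (\<Prod>i\<in>Z. x) * (\<Prod>i\<in>S-Z. y))"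
    by (rule prod_add[OF assms])
  thus ?thesis by simp
qed

lemma sumf_lemma:
  fixes x y :: real
  assumes fin: "finite E" and "D \<subseteq> E" "B \<subseteq> E" "D \<inter> B = {}"
  shows "(\<Sum>w\<in>Pow E. if D \<subseteq> w \<and> w \<inter> B = {} \<and> w \<subseteq> E \<and> B \<subseteq> E
            then x ^ card (w - D) * y ^ card (E - w - B) else 0) = (x + y) ^ card (E - B - D)"
proof -
  define S where "S = E - B - D"
  have finS: "finite S" using fin S_def by auto
  have seteq: "{w \<in> Pow E. D \<subseteq> w \<and> w \<inter> B = {} \<and> w \<subseteq> E \<and> B \<subseteq> E} = (\<lambda>Z. D \<union> Z) ` Pow S"
  proof
    show "{w \<in> Pow E. D \<subseteq> w \<and> w \<inter> B = {} \<and> w \<subseteq> E \<and> B \<subseteq> E} \<subseteq> (\<lambda>Z. D \<union> Z) ` Pow S"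
    proof
      fix w assume w: "w \<in> {w \<in> Pow E. D \<subseteq> w \<and> w \<inter> B = {} \<and> w \<subseteq> E \<and> B \<subseteq> E}"
      hence "w = D \<union> (w - D)" "w - D \<in> Pow S" using S_def by auto
      thus "w \<in> (\<lambda>Z. D \<union> Z) ` Pow S" by blast
    qed
    show "(\<lambda>Z. D \<union> Z) ` Pow S \<subseteq> {w \<in> Pow E. D \<subseteq> w \<and> w \<inter> B = {} \<and> w \<subseteq> E \<and> B \<subseteq> E}"
      using assms S_def by auto
  qed
  have inj: "inj_on (\<lambda>Z. D \<union> Z) (Pow S)"
    unfolding inj_on_def S_def by blast
  have "(\<Sum>w\<in>Pow E. if D \<subseteq> w \<and> w \<inter> B = {} \<and> w \<subseteq> E \<and> B \<subseteq> E
            then x ^ card (w - D) * y ^ card (E - w - B) else 0)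
      = (\<Sum>w\<in>{w \<in> Pow E. D \<subseteq> w \<and> w \<inter> B = {} \<and> w \<subseteq> E \<and> B \<subseteq> E}. x ^ card (w - D) * y ^ card (E - w - B))"
    by (rule sum.inter_filter[symmetric]) (use fin in simp)
  also have "\<dots> = (\<Sum>w\<in>(\<lambda>Z. D \<union> Z) ` Pow S. x ^ card (w - D) * y ^ card (E - w - B))"
    by (simp only: seteq)
  also have "\<dots> = (\<Sum>Z\<in>Pow S. x ^ card (D \<union> Z - D) * y ^ card (E - (D \<union> Z) - B))"
    by (simp add: sum.reindex[OF inj])
  also have "\<dots> = (\<Sum>Z\<in>Pow S. x ^ card Z * y ^ card (S - Z))"
  proof (rule sum.cong[OF refl])
    fix Z assume "Z \<in> Pow S"
    hence "D \<union> Z - D = Z" "E - (D \<union> Z) - B = S - Z" using S_def by auto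
    thus "x ^ card (D \<union> Z - D) * y ^ card (E - (D \<union> Z) - B) = x ^ card Z * y ^ card (S - Z)" by simp
  qed
  also have "\<dots> = (x + y) ^ card S" by (rule bin_pow[OF finS])
  finally show ?thesis unfolding S_def .
qed

lemma bern_lemma:
  fixes p :: real
  assumes fin: "finite S" and DS: "D \<subseteq> S"
  shows "bern_union_law p S D A = (if D \<subseteq> A \<and> A \<subseteq> S
           then p ^ card (A - D) * (1 - p) ^ (card (S - D) - card (A - D)) else 0)"
proof (cases "D \<subseteq> A \<and> A \<subseteq> S")
  case False
  hence "\<And>Z. Z \<in> Pow S \<Longrightarrow> D \<union> Z \<noteq> A" using DS by auto
  hence "bern_union_law p S D A = 0" unfolding bern_union_law_def by simp
  thus ?thesis by (subst if_not_P[OF False]) simp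
next
  case True
  define A1 where "A1 = A - D"
  define k where "k = card A1"
  define m where "m = card (S - D)"
  have finD: "finite D" using fin DS finite_subset by auto
  have seteq: "{Z \<in> Pow S. D \<union> Z = A} = (\<lambda>Y. A1 \<union> Y) ` Pow D"
  proof
    show "{Z \<in> Pow S. D \<union> Z = A} \<subseteq> (\<lambda>Y. A1 \<union> Y) ` Pow D"
    proof
      fix Z assume Z: "Z \<in> {Z \<in> Pow S. D \<union> Z = A}"
      hence "Z = A1 \<union> (Z \<inter> D)" "Z \<inter> D \<in> Pow D" using A1_def by auto
      thus "Z \<in> (\<lambda>Y. A1 \<union> Y) ` Pow D" by blast
    qed
    show "(\<lambda>Y. A1 \<union> Y) ` Pow D \<subseteq> {Z \<in> Pow S. D \<union> Z = A}"
      using True DS A1_def by auto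
  qed
  have inj: "inj_on (\<lambda>Y. A1 \<union> Y) (Pow D)"
    unfolding inj_on_def A1_def by blast
  have km: "k \<le> m" unfolding k_def m_def A1_def
    using True fin by (intro card_mono) auto
  have cS: "card S = m + card D" unfolding m_def using fin DS
    by (metis card_Diff_subset finD card_mono le_add_diff_inverse2)
  have "bern_union_law p S D A = (\<Sum>Z\<in>{Z \<in> Pow S. D \<union> Z = A}. p ^ card Z * (1 - p) ^ (card S - card Z))"
    unfolding bern_union_law_def by (rule sum.inter_filter[symmetric]) (use fin in simp)
  also have "\<dots> = (\<Sum>Z\<in>(\<lambda>Y. A1 \<union> Y) ` Pow D. p ^ card Z * (1 - p) ^ (card S - card Z))"
    by (simp only: seteq)
  also have "\<dots> = (\<Sum>Y\<in>Pow D. p ^ card (A1 \<union> Y) * (1 - p) ^ (card S - card (A1 \<union> Y)))"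
    by (simp add: sum.reindex[OF inj])
  also have "\<dots> = (\<Sum>Y\<in>Pow D. (p ^ k * (1 - p) ^ (m - k)) * (p ^ card Y * (1 - p) ^ card (D - Y)))"
  proof (rule sum.cong[OF refl])
    fix Y assume Y: "Y \<in> Pow D"
    have finY: "finite Y" using Y finD finite_subset by auto
    have finA1: "finite A1" using True fin A1_def finite_subset by auto
    have c1: "card (A1 \<union> Y) = k + card Y" unfolding k_def
      using Y finY finA1 A1_def by (subst card_Un_disjoint) auto
    have cY: "card Y \<le> card D" using Y finD card_mono by auto
    have c2: "card (D - Y) = card D - card Y" using Y finD card_Diff_subset finY by auto
    have "card S - card (A1 \<union> Y) = (m - k) + card (D - Y)" using c1 c2 cS km cY by simp
    thus "p ^ card (A1 \<union> Y) * (1 - p) ^ (card S - card (A1 \<union> Y)) =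
         (p ^ k * (1 - p) ^ (m - k)) * (p ^ card Y * (1 - p) ^ card (D - Y))"
      using c1 by (simp add: power_add)
  qed
  also have "\<dots> = p ^ k * (1 - p) ^ (m - k)"
    by (simp add: sum_distrib_left[symmetric] bin_pow[OF finD])
  finally show ?thesis using True unfolding k_def m_def A1_def by simp
qed


theorem lemma5p5:
  fixes V :: "'v set" and U :: "'u set" and E :: "'e set"
    and ends :: "'e \<Rightarrow> 'v \<times> 'v" and dends :: "'e \<Rightarrow> 'u \<times> 'u"
    and Q Q' :: "complex set" and q q' :: nat and a b :: real
    and s' :: "'u \<Rightarrow> complex" and B A :: "'e set"
  assumes emb: "cellularly_embedded_with_dual V U E ends dends"
    and "q \<ge> 1" and "q' \<ge> 1"
    and "finite Q" and "finite Q'" and "card Q = q" and "card Q' = q'"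
    and "uminus ` Q = Q" and "uminus ` Q' = Q'"
    and "0 < a" and "a \<le> 1" and "0 < b" and "b \<le> 1"
    and "a + b \<ge> 1"
    and "s' \<in> PiE U (\<lambda>_. Q')"
    and pos: "prob_dual_cond V U E ends dends Q Q' a b s' B > 0"
  shows "prob_primal_dual V U E ends dends Q Q' a b s' A B
           / prob_dual_cond V U E ends dends Q Q' a b s' B
         = bern_union_law ((1 - b) / a) (E - B) (eta_dual E dends s') A"
proof -
  have finE: "finite E" using emb unfolding cellularly_embedded_with_dual_def by auto
  have apos: "0 < a" by fact
  have s'P: "s' \<in> PiE U (\<lambda>_. Q')" by fact
  define et' where "et' = eta_dual E dends s'"
  have et'E: "et' \<subseteq> E" unfolding et'_def eta_dual_def by auto
  define P where "P = PiE V (\<lambda>_. Q)"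
  define Z where "Z = partition_fn V U E ends dends Q Q' a b"
  define h where "h \<sigma> = (if \<sigma> \<in> P \<and> eta_primal E ends \<sigma> \<subseteq> B then a ^ card et' * b ^ card (eta_primal E ends \<sigma>) * (1-a) ^ card (B - eta_primal E ends \<sigma>) / Z else 0)" for \<sigma>
  define f where "f \<omega> = (if et' \<subseteq> \<omega> \<and> \<omega> \<inter> B = {} \<and> \<omega> \<subseteq> E \<and> B \<subseteq> E then (1-b)^card (\<omega> - et') * (a+b-1)^card (E - \<omega> - B) else 0)" for \<omega>
  have key: "joint_prob V U E ends dends Q Q' a b \<sigma> s' \<omega> B = h \<sigma> * f \<omega>" for \<sigma> \<omega>
  proof (cases "\<sigma> \<in> P")
    case False thus ?thesis unfolding joint_prob_def h_def P_def by simp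
  next
    case True
    show ?thesis
    proof (cases "et' \<subseteq> \<omega> \<and> eta_primal E ends \<sigma> \<subseteq> B \<and> \<omega> \<inter> B = {} \<and> \<omega> \<subseteq> E \<and> B \<subseteq> E")
      case c: True
      hence "eta_primal E ends \<sigma> \<inter> et' = {}" by blast
      thus ?thesis using True s'P c unfolding joint_prob_def h_def f_def spin_weight_def perc_kernel_def
        et'_def[symmetric] P_def[symmetric] Z_def[symmetric] by simp
    next
      case c: False
      thus ?thesis using True s'P unfolding joint_prob_def h_def f_def spin_weight_def perc_kernel_def
        et'_def[symmetric] P_def[symmetric] Z_def[symmetric] by auto
    qed
  qed
  define H where "H = sum h P"
  have ppd: "prob_primal_dual V U E ends dends Q Q' a b s' A B = H * f A"
    unfolding prob_primal_dual_def key H_def P_def[symmetric] by (simp add: sum_distrib_right)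
  have pdc: "prob_dual_cond V U E ends dends Q Q' a b s' B = H * sum f (Pow E)"
    unfolding prob_dual_cond_def key H_def P_def[symmetric]
    by (simp add: sum_distrib_right sum_distrib_left) (rule sum.swap)
  have fnz: "sum f (Pow E) \<noteq> 0" and Hnz: "H \<noteq> 0" using pos pdc by auto
  have cond: "B \<subseteq> E \<and> et' \<inter> B = {}"
  proof (rule ccontr)
    assume "\<not> (B \<subseteq> E \<and> et' \<inter> B = {})"
    hence "\<And>w. f w = 0" unfolding f_def by auto
    thus False using fnz by simp
  qed
  have sumf: "sum f (Pow E) = a ^ card (E - B - et')"
    using sumf_lemma[OF finE et'E, of B "1 - b" "a + b - 1"] cond unfolding f_def by simp
  define p where "p = (1 - b) / a"
  have bern: "bern_union_law p (E - B) et' A = (if et' \<subseteq> A \<and> A \<subseteq> E - B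
           then p ^ card (A - et') * (1 - p) ^ (card (E - B - et') - card (A - et')) else 0)"
  proof -
    have "et' \<subseteq> E - B" using et'E cond by auto
    thus ?thesis using bern_lemma[of "E - B" et' p A] finE by simp
  qed
  have lhs: "prob_primal_dual V U E ends dends Q Q' a b s' A B
           / prob_dual_cond V U E ends dends Q Q' a b s' B = f A / a ^ card (E - B - et')"
    using ppd pdc sumf Hnz by simp
  show ?thesis
  proof (cases "et' \<subseteq> A \<and> A \<subseteq> E - B")
    case False
    hence "f A = 0" unfolding f_def by auto
    thus ?thesis using lhs bern False unfolding et'_def[symmetric] p_def[symmetric] by simp
  next
    case True
    define k where "k = card (A - et')"
    define m where "m = card (E - B - et')"
    have km: "k \<le> m" unfolding k_def m_def using True finE by (intro card_mono) auto
    have c: "card (E - A - B) = m - k" unfolding k_def m_def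
    proof -
      have "E - A - B = (E - B - et') - (A - et')" using True by auto
      moreover have "A - et' \<subseteq> E - B - et'" using True by auto
      ultimately show "card (E - A - B) = card (E - B - et') - card (A - et')"
        using finE by (simp add: card_Diff_subset finite_subset)
    qed
    have fA: "f A = (1-b)^k * (a+b-1)^(m-k)" unfolding f_def k_def[symmetric] c using True cond by auto
    have am: "a ^ m = a ^ k * a ^ (m - k)" using km by (simp add: power_add[symmetric])
    have "1 - p = (a + b - 1) / a" unfolding p_def using apos by (simp add: field_simps)
    hence "p ^ k * (1 - p) ^ (m - k) = (1-b)^k * (a+b-1)^(m-k) / a ^ m"
      unfolding p_def am by (simp add: power_divide)
    thus ?thesis using lhs bern True fA unfolding et'_def[symmetric] p_def[symmetric] k_def[symmetric] m_def[symmetric] by simp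
  qed
qed

end
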